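(* Let $\mathbb{K}$ be a field and let $L_1,\ldots,L_k$ be nonzero operators in $\mathbb{K}[x]\langle\partial\rangle$. Let $s=\operatorname{ord}(L_1)+\cdots+\operatorname{ord}(L_k)$ and $d=\max_{1\le i\le k}\deg_x(L_i)$. If $L=\operatorname{lclm}(L_1,\ldots,L_k)$, then $\deg_x(L)\le d\,(k(s+1)-s)$.
   Context: $\mathbb{K}(x)\langle\partial\rangle$ is the ring of differential operators with coefficients in $\mathbb{K}(x)$ and $\partial a=a\partial+\frac{da}{dx}$; $\mathbb{K}[x]\langle\partial\rangle$ is the subring with polynomial coefficients. Order is degree in $\partial$; $\deg_x$ of a nonzero operator in $\mathbb{K}[x]\langle\partial\rangle$ is the maximal degree in $x$ of its coefficients. An LCLM of $L_1,\ldots,L_k$ is a nonzero common left multiple $Q_1L_1=\cdots=Q_kL_k$ ($Q_i\in\mathbb{K}(x)\langle\partial\rangle$) of least order; $\operatorname{lclm}(L_1,\ldots,L_k)$ is the LCLM normalised to lie in $\mathbb{K}[x]\langle\partial\rangle$ with coefficients having gcd $1$. *)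

theory Defs
  imports "HOL-Computational_Algebra.Polynomial" "HOL-Computational_Algebra.Fraction_Field"
begin

(* Linear differential operators  sum_i a_i \<partial>^i  with coefficients in a ring 'b carrying a
   derivation delta are represented as polynomials in \<partial> ('b poly): coeff A i = a_i,
   and the order of A is degree A.  Addition is polynomial addition; the (noncommutative)
   product is the Ore product determined by  \<partial> a = a \<partial> + delta a. *)

(* left multiplication by \<partial>:  \<partial> (sum b_j \<partial>^j) = sum (b_j \<partial>^(j+1) + delta(b_j) \<partial>^j) *)
definition dleft :: "('b::comm_ring_1 \<Rightarrow> 'b) \<Rightarrow> 'b poly \<Rightarrow> 'b poly" where
  "dleft delta B = pCons 0 B + map_poly delta B"

definition omult :: "('b::comm_ring_1 \<Rightarrow> 'b) \<Rightarrow> 'b poly \<Rightarrow> 'b poly \<Rightarrow> 'b poly" where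
  "omult delta A B = (\<Sum>i\<le>degree A. smult (coeff A i) ((dleft delta ^^ i) B))"

(* the derivation d/dx on K(x) = 'a poly fract, via the quotient rule (well defined) *)
definition fderiv :: "'a::field poly fract \<Rightarrow> 'a poly fract" where
  "fderiv r = (SOME s. \<forall>p q. q \<noteq> 0 \<longrightarrow> r = Fract p q \<longrightarrow>
                   s = Fract (pderiv p * q - p * pderiv q) (q * q))"

definition embed_op :: "'a::field poly poly \<Rightarrow> 'a poly fract poly" where
  "embed_op L = map_poly (\<lambda>c. Fract c 1) L"

definition degx :: "'a::field poly poly \<Rightarrow> nat" where
  "degx L = Max (degree ` set (coeffs L))"

definition common_left_multiple :: "'a::field poly poly list \<Rightarrow> 'a poly fract poly \<Rightarrow> bool" where
  "common_left_multiple Ls M \<longleftrightarrow>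
     (\<forall>Li\<in>set Ls. \<exists>Q. M = omult fderiv Q (embed_op Li))"

(* L = lclm(L_1,...,L_k): an LCLM (nonzero common left multiple of least order) lying in
   K[x]<\<partial>> whose coefficients have gcd 1 (unique up to a nonzero constant of K) *)
definition is_lclm :: "'a::field poly poly list \<Rightarrow> 'a poly poly \<Rightarrow> bool" where
  "is_lclm Ls L \<longleftrightarrow>
     L \<noteq> 0 \<and>
     common_left_multiple Ls (embed_op L) \<and>
     (\<forall>M. M \<noteq> 0 \<longrightarrow> common_left_multiple Ls M \<longrightarrow> degree L \<le> degree M) \<and>
     (\<forall>g. (\<forall>c\<in>set (coeffs L). g dvd c) \<longrightarrow> is_unit g)"

end

theory Submission
  imports Defs "HOL-Computational_Algebra.Polynomial_Factorial"
begin


lemma coeff_dleft: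
  assumes "\<delta> 0 = 0"
  shows "coeff (dleft \<delta> B) n = coeff (pCons 0 B) n + \<delta> (coeff B n)"
  unfolding dleft_def by (simp add: coeff_map_poly assms)

lemma degree_dleft_le: "degree (dleft \<delta> B) \<le> degree B + 1"
proof -
  have a: "degree (pCons 0 B) \<le> degree B + 1"
    using degree_pCons_le[of 0 B] by simp
  have b: "degree (map_poly \<delta> B) \<le> degree B + 1"
    using map_poly_degree_leq[of \<delta> B] by simp
  show ?thesis unfolding dleft_def
    using degree_add_le[OF a b] .
qed

lemma degree_dleft_pow_le: "degree ((dleft \<delta> ^^ e) B) \<le> degree B + e"
proof (induction e)
  case 0 then show ?case by simp
next
  case (Suc e)
  then show ?case using degree_dleft_le[of \<delta> "(dleft \<delta> ^^ e) B"] by simp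
qed

lemma coeff_dleft_pow_high:
  "degree B + e < n \<Longrightarrow> coeff ((dleft \<delta> ^^ e) B) n = 0"
  using degree_dleft_pow_le[where \<delta>=\<delta> and e=e and B=B] by (intro coeff_eq_0) simp

lemma coeff_dleft_pow_top:
  assumes "\<delta> 0 = 0"
  shows "coeff ((dleft \<delta> ^^ e) B) (degree B + e) = lead_coeff B"
proof (induction e)
  case 0 then show ?case by simp
next
  case (Suc e)
  have "coeff ((dleft \<delta> ^^ Suc e) B) (degree B + Suc e)
      = coeff (pCons 0 ((dleft \<delta> ^^ e) B)) (Suc (degree B + e)) + \<delta> (coeff ((dleft \<delta> ^^ e) B) (degree B + Suc e))"
    using coeff_dleft[where \<delta>=\<delta>, OF assms] by simp
  also have "\<delta> (coeff ((dleft \<delta> ^^ e) B) (degree B + Suc e)) = 0"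
    using coeff_dleft_pow_high[where B=B and e=e and n="degree B + Suc e" and \<delta>=\<delta>] assms by simp
  finally show ?case using Suc by simp
qed

lemma coeff_omult:
  assumes "degree Q \<le> D"
  shows "coeff (omult \<delta> Q B) n = (\<Sum>e\<le>D. coeff Q e * coeff ((dleft \<delta> ^^ e) B) n)"
proof -
  have "coeff (omult \<delta> Q B) n = (\<Sum>e\<le>degree Q. coeff Q e * coeff ((dleft \<delta> ^^ e) B) n)"
    unfolding omult_def coeff_sum by simp
  also have "\<dots> = (\<Sum>e\<le>D. coeff Q e * coeff ((dleft \<delta> ^^ e) B) n)"
    by (rule sum.mono_neutral_left) (use assms in \<open>auto simp: coeff_eq_0\<close>)
  finally show ?thesis .
qed

lemma degree_omult_le: "degree (omult \<delta> Q B) \<le> degree Q + degree B"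
proof (rule degree_le, intro allI impI)
  fix n assume n: "degree Q + degree B < n"
  show "coeff (omult \<delta> Q B) n = 0"
    unfolding coeff_omult[OF order.refl]
    by (rule sum.neutral) (use n in \<open>auto simp: coeff_dleft_pow_high\<close>)
qed

lemma coeff_omult_top:
  assumes "\<delta> 0 = 0"
  shows "coeff (omult \<delta> Q B) (degree Q + degree B) = lead_coeff Q * lead_coeff B"
proof -
  have "coeff (omult \<delta> Q B) (degree Q + degree B)
     = (\<Sum>e\<le>degree Q. coeff Q e * coeff ((dleft \<delta> ^^ e) B) (degree Q + degree B))"
    by (rule coeff_omult) simp
  also have "\<dots> = coeff Q (degree Q) * coeff ((dleft \<delta> ^^ degree Q) B) (degree Q + degree B)
     + (\<Sum>e\<in>{..degree Q} - {degree Q}. coeff Q e * coeff ((dleft \<delta> ^^ e) B) (degree Q + degree B))"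
    by (subst sum.remove[of _ "degree Q"]) auto
  also have "(\<Sum>e\<in>{..degree Q} - {degree Q}. coeff Q e * coeff ((dleft \<delta> ^^ e) B) (degree Q + degree B)) = 0"
    by (rule sum.neutral) (auto simp: coeff_dleft_pow_high)
  also have "coeff ((dleft \<delta> ^^ degree Q) B) (degree Q + degree B) = lead_coeff B"
    using coeff_dleft_pow_top[where \<delta>=\<delta> and e="degree Q" and B=B, OF assms] by (simp add: add.commute)
  finally show ?thesis by simp
qed

lemma omult_nonzero:
  fixes Q B :: "'b::idom poly"
  assumes "\<delta> 0 = 0" "Q \<noteq> 0" "B \<noteq> 0"
  shows "omult \<delta> Q B \<noteq> 0" "degree (omult \<delta> Q B) = degree Q + degree B"
proof -
  have c: "coeff (omult \<delta> Q B) (degree Q + degree B) \<noteq> 0"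
    using coeff_omult_top[where \<delta>=\<delta> and Q=Q and B=B, OF assms(1)] assms by simp
  then show "omult \<delta> Q B \<noteq> 0" by auto
  show "degree (omult \<delta> Q B) = degree Q + degree B"
    using c degree_omult_le[of \<delta> Q B] le_degree[of "omult \<delta> Q B" "degree Q + degree B"] by simp
qed

lemma omult_0_left [simp]: "omult \<delta> 0 B = 0"
  unfolding omult_def by simp

lemma omult_lin:
  "omult \<delta> (Q1 - smult c Q2) B = omult \<delta> Q1 B - smult c (omult \<delta> Q2 B)"
proof (rule poly_eqI)
  fix n
  define D where "D = max (degree Q1) (degree Q2)"
  have d: "degree (Q1 - smult c Q2) \<le> D" unfolding D_def
    using degree_diff_le_max[of Q1 "smult c Q2"] degree_smult_le[of c Q2] by simp
  have 1: "coeff (omult \<delta> Q1 B) n = (\<Sum>e\<le>D. coeff Q1 e * coeff ((dleft \<delta> ^^ e) B) n)"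
    by (rule coeff_omult) (simp add: D_def)
  have 2: "coeff (omult \<delta> Q2 B) n = (\<Sum>e\<le>D. coeff Q2 e * coeff ((dleft \<delta> ^^ e) B) n)"
    by (rule coeff_omult) (simp add: D_def)
  show "coeff (omult \<delta> (Q1 - smult c Q2) B) n = coeff (omult \<delta> Q1 B - smult c (omult \<delta> Q2 B)) n"
    unfolding coeff_diff coeff_smult coeff_omult[OF d] 1 2 sum_distrib_left sum_subtractf[symmetric]
    by (rule sum.cong) (simp_all add: left_diff_distrib mult.assoc)
qed



lemma fract1_add [simp]: "Fract a 1 + Fract b 1 = Fract (a + b) (1::'a::idom)"
  by simp
lemma fract1_mult [simp]: "Fract a 1 * Fract b 1 = Fract (a * b) (1::'a::idom)"
  by simp
lemma fract1_diff [simp]: "Fract a 1 - Fract b 1 = Fract (a - b) (1::'a::idom)"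
  by simp
lemma fract1_0 [simp]: "Fract 0 (1::'a::idom) = 0"
  by (simp add: Zero_fract_def)
lemma fract1_eq_iff [simp]: "Fract a 1 = Fract b (1::'a::idom) \<longleftrightarrow> a = b"
  by (simp add: eq_fract)
lemma fract1_eq_0_iff [simp]: "Fract a (1::'a::idom) = 0 \<longleftrightarrow> a = 0"
  using fract1_eq_iff[of a 0] by (simp only: fract1_0)
lemma fract1_sum: "Fract (\<Sum>i\<in>A. f i) (1::'a::idom) = (\<Sum>i\<in>A. Fract (f i) 1)"
proof (induction A rule: infinite_finite_induct)
  case (insert x F)
  have e: "Fract (f x + sum f F) 1 = Fract (f x) 1 + Fract (sum f F) 1"
    by (simp only: fract1_add)
  show ?case
    by (simp only: sum.insert[OF insert(1,2)] e insert.IH)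
qed simp_all

lemma degree_pderiv_le: "degree (pderiv p) \<le> degree p"
  by (rule degree_le) (simp add: coeff_pderiv coeff_eq_0)

lemma fderiv_fract1: "fderiv (Fract c 1) = Fract (pderiv c) 1"
  unfolding fderiv_def
proof (rule someI2[where a="Fract (pderiv c) 1"])
  show "\<forall>p q. q \<noteq> 0 \<longrightarrow> Fract c 1 = Fract p q \<longrightarrow>
          Fract (pderiv c) 1 = Fract (pderiv p * q - p * pderiv q) (q * q)"
  proof (intro allI impI)
    fix p q :: "'a poly" assume q: "q \<noteq> 0" and e: "Fract c 1 = Fract p q"
    then have "c * q = p" by (simp add: eq_fract)
    then have "pderiv p = pderiv c * q + c * pderiv q"
      using pderiv_mult[of c q] by (simp add: algebra_simps)
    then have "pderiv c * (q * q) = (pderiv p * q - p * pderiv q) * 1"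
      using \<open>c * q = p\<close> by (simp add: algebra_simps)
    then show "Fract (pderiv c) 1 = Fract (pderiv p * q - p * pderiv q) (q * q)"
      using q by (simp add: eq_fract)
  qed
next
  fix x assume "\<forall>p q. q \<noteq> 0 \<longrightarrow> Fract c 1 = Fract p q \<longrightarrow>
          x = Fract (pderiv p * q - p * pderiv q) (q * q)"
  then have "x = Fract (pderiv c * 1 - c * pderiv 1) (1 * 1)"
    by (drule_tac spec[of _ c], drule_tac spec[of _ 1]) simp
  then show "x = Fract (pderiv c) 1" by simp
qed

lemma fderiv_0 [simp]: "fderiv 0 = 0"
  using fderiv_fract1[of 0] by simp

lemma coeff_embed [simp]: "coeff (embed_op B) n = Fract (coeff B n) 1"
  unfolding embed_op_def by (simp add: coeff_map_poly)

lemma embed_0_iff [simp]: "embed_op B = 0 \<longleftrightarrow> B = 0"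
proof
  assume "embed_op B = 0"
  then have "\<And>n. coeff (embed_op B) n = 0" by simp
  then show "B = 0" by (intro poly_eqI) simp
qed (simp add: embed_op_def)

lemma embed_inj: "embed_op A = embed_op B \<longleftrightarrow> A = B"
proof
  assume "embed_op A = embed_op B"
  then have "\<And>n. coeff (embed_op A) n = coeff (embed_op B) n" by simp
  then show "A = B" by (intro poly_eqI) simp
qed simp

lemma degree_embed [simp]: "degree (embed_op B) = degree B"
  unfolding embed_op_def by (rule degree_map_poly) simp

lemma dleft_embed: "dleft fderiv (embed_op C) = embed_op (dleft pderiv C)"
proof (rule poly_eqI)
  fix n
  show "coeff (dleft fderiv (embed_op C)) n = coeff (embed_op (dleft pderiv C)) n"
    unfolding coeff_dleft[where \<delta>=fderiv, OF fderiv_0] coeff_embed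
      coeff_dleft[where \<delta>=pderiv, OF pderiv_0]
    by (cases n) (simp_all add: fderiv_fract1)
qed

lemma dleft_pow_embed: "(dleft fderiv ^^ e) (embed_op C) = embed_op ((dleft pderiv ^^ e) C)"
  by (induction e) (simp_all add: dleft_embed)

lemma embed_omult: "embed_op (omult pderiv Q B) = omult fderiv (embed_op Q) (embed_op B)"
proof (rule poly_eqI)
  fix n
  show "coeff (embed_op (omult pderiv Q B)) n = coeff (omult fderiv (embed_op Q) (embed_op B)) n"
    unfolding coeff_embed coeff_omult[where Q=Q and D="degree Q", OF order.refl]
      coeff_omult[where Q="embed_op Q" and D="degree Q", simplified]
    by (simp add: fract1_sum dleft_pow_embed)
qed

lemma degree_coeff_dleft:
  assumes "\<And>n. degree (coeff B n) \<le> D"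
  shows "degree (coeff (dleft pderiv B) n) \<le> D"
proof -
  have "coeff (dleft pderiv B) n = coeff (pCons 0 B) n + pderiv (coeff B n)"
    by (rule coeff_dleft) simp
  moreover have "degree (coeff (pCons 0 B) n) \<le> D"
    using assms by (cases n) simp_all
  moreover have "degree (pderiv (coeff B n)) \<le> D"
    using assms[of n] degree_pderiv_le[of "coeff B n"] by linarith
  ultimately show ?thesis using degree_add_le by simp
qed

lemma degree_coeff_dleft_pow:
  assumes "\<And>n. degree (coeff B n) \<le> D"
  shows "degree (coeff ((dleft pderiv ^^ e) B) n) \<le> D"
  using assms
proof (induction e arbitrary: n)
  case 0 then show ?case by simp
next
  case (Suc e) then show ?case by (simp add: degree_coeff_dleft)
qed

lemma degree_coeff_le_degx: "degree (coeff L n) \<le> degx L"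
proof (cases "coeff L n = 0")
  case True then show ?thesis by simp
next
  case False
  then have "L \<noteq> 0" "n \<le> degree L" using le_degree by auto
  then have "coeff L n \<in> set (coeffs L)" by (rule coeff_in_coeffs)
  then show ?thesis unfolding degx_def by simp
qed

lemma degx_le:
  assumes "L \<noteq> 0" "\<And>n. degree (coeff L n) \<le> D"
  shows "degx L \<le> D"
  unfolding degx_def
proof (subst Max_le_iff)
  show "finite (degree ` set (coeffs L))" by simp
  show "degree ` set (coeffs L) \<noteq> {}" using assms by simp
  show "\<forall>a\<in>degree ` set (coeffs L). a \<le> D"
  proof
    fix a assume "a \<in> degree ` set (coeffs L)"
    then obtain c where c: "c \<in> set (coeffs L)" "a = degree c" by auto
    then have "c \<in> range (coeff L)" by (simp add: range_coeff)
    then show "a \<le> D" using c assms(2) by auto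
  qed
qed



lemma UD:
  fixes c :: "'r \<Rightarrow> 'c \<Rightarrow> 'f::field"
  assumes "finite I" "finite J" "card I < card J"
  shows "\<exists>x. (\<exists>j\<in>J. x j \<noteq> 0) \<and> (\<forall>i\<in>I. (\<Sum>j\<in>J. c i j * x j) = 0)"
  using assms
proof (induction I arbitrary: J c rule: finite_induct)
  case empty
  then have "J \<noteq> {}" by auto
  then obtain j where "j \<in> J" by auto
  then show ?case by (intro exI[of _ "\<lambda>j'. if j' = j then 1 else 0"]) auto
next
  case (insert i I)
  show ?case
  proof (cases "\<forall>j\<in>J. c i j = 0")
    case True
    have "card I < card J" using insert by simp
    then obtain x where x: "\<exists>j\<in>J. x j \<noteq> 0" "\<forall>i\<in>I. (\<Sum>j\<in>J. c i j * x j) = 0"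
      using insert.IH[of J c] insert.prems by blast
    show ?thesis by (rule exI[of _ x]) (use x True in auto)
  next
    case False
    then obtain j0 where j0: "j0 \<in> J" "c i j0 \<noteq> 0" by auto
    define c' where "c' = (\<lambda>i' j. c i' j - c i' j0 / c i j0 * c i j)"
    have "card I < card (J - {j0})" using insert j0 by (simp add: card_Diff_singleton)
    then obtain x' where x': "\<exists>j\<in>J-{j0}. x' j \<noteq> 0"
        "\<forall>i'\<in>I. (\<Sum>j\<in>J-{j0}. c' i' j * x' j) = 0"
      using insert.IH[of "J - {j0}" c'] insert.prems by blast
    define S where "S = (\<Sum>j'\<in>J-{j0}. c i j' * x' j')"
    define x where "x = (\<lambda>j. if j = j0 then - S / c i j0 else x' j)"
    have split: "(\<Sum>j\<in>J. g j * x j) = g j0 * x j0 + (\<Sum>j\<in>J-{j0}. g j * x' j)" for g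
    proof -
      have "(\<Sum>j\<in>J. g j * x j) = g j0 * x j0 + (\<Sum>j\<in>J-{j0}. g j * x j)"
        using j0 insert.prems(1) by (simp add: sum.remove)
      also have "(\<Sum>j\<in>J-{j0}. g j * x j) = (\<Sum>j\<in>J-{j0}. g j * x' j)"
        by (rule sum.cong) (auto simp: x_def)
      finally show ?thesis .
    qed
    show ?thesis
    proof (intro exI[of _ x] conjI)
      show "\<exists>j\<in>J. x j \<noteq> 0" using x' by (auto simp: x_def)
      show "\<forall>i'\<in>insert i I. (\<Sum>j\<in>J. c i' j * x j) = 0"
      proof
        fix i' assume "i' \<in> insert i I"
        then consider "i' = i" | "i' \<in> I" by auto
        then show "(\<Sum>j\<in>J. c i' j * x j) = 0"
        proof cases
          case 1
          then show ?thesis unfolding split using j0 by (simp add: x_def S_def)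
        next
          case 2
          have "0 = (\<Sum>j\<in>J-{j0}. c' i' j * x' j)" using x' 2 by simp
          also have "\<dots> = (\<Sum>j\<in>J-{j0}. c i' j * x' j) - c i' j0 / c i j0 * S"
            unfolding c'_def S_def sum_distrib_left sum_subtractf[symmetric]
            by (rule sum.cong) (simp_all add: algebra_simps)
          finally have "(\<Sum>j\<in>J-{j0}. c i' j * x' j) = c i' j0 / c i j0 * S" by simp
          then show ?thesis unfolding split using j0 by (simp add: x_def)
        qed
      qed
    qed
  qed
qed

definition indep :: "('r \<Rightarrow> 'c \<Rightarrow> 'f::field) \<Rightarrow> 'c set \<Rightarrow> 'r set \<Rightarrow> bool" where
  "indep a J S \<longleftrightarrow> (\<forall>l. (\<forall>j\<in>J. (\<Sum>i\<in>S. l i * a i j) = 0) \<longrightarrow> (\<forall>i\<in>S. l i = 0))"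

lemma MAXIND:
  fixes a :: "'r \<Rightarrow> 'c \<Rightarrow> 'f::field"
  assumes "finite R" "finite J"
  shows "\<exists>S\<subseteq>R. indep a J S \<and>
    (\<forall>r\<in>R. \<forall>x. (\<forall>i\<in>S. (\<Sum>j\<in>J. a i j * x j) = 0) \<longrightarrow> (\<Sum>j\<in>J. a r j * x j) = 0)"
proof -
  define X where "X = {S. S \<subseteq> R \<and> indep a J S}"
  have "finite X" unfolding X_def using assms(1) by (simp add: finite_subset[of _ "Pow R"] Collect_mono Pow_def)
  moreover have "{} \<in> X" unfolding X_def indep_def by simp
  ultimately obtain S where S: "S \<in> X" "\<forall>T\<in>X. S \<subseteq> T \<longrightarrow> S = T"
    using finite_has_maximal[of X] by blast
  have SR: "S \<subseteq> R" and Si: "indep a J S" using S(1) by (auto simp: X_def)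
  have fS: "finite S" using SR assms(1) finite_subset by blast
  show ?thesis
  proof (intro exI[of _ S] conjI SR Si ballI allI impI)
    fix r x assume r: "r \<in> R" and hx: "\<forall>i\<in>S. (\<Sum>j\<in>J. a i j * x j) = 0"
    show "(\<Sum>j\<in>J. a r j * x j) = 0"
    proof (cases "r \<in> S")
      case True then show ?thesis using hx by simp
    next
      case False
      have "insert r S \<notin> X" using S(2) False by auto
      then have "\<not> indep a J (insert r S)" using SR r by (auto simp: X_def)
      then obtain l where l: "\<forall>j\<in>J. (\<Sum>i\<in>insert r S. l i * a i j) = 0"
          "\<exists>i\<in>insert r S. l i \<noteq> 0"
        unfolding indep_def by blast
      have l2: "\<forall>j\<in>J. l r * a r j + (\<Sum>i\<in>S. l i * a i j) = 0"
        using l(1) fS False by simp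
      have "l r \<noteq> 0"
      proof
        assume "l r = 0"
        then have "\<forall>j\<in>J. (\<Sum>i\<in>S. l i * a i j) = 0" using l2 by simp
        then have "\<forall>i\<in>S. l i = 0" using Si unfolding indep_def by blast
        then show False using l(2) \<open>l r = 0\<close> by auto
      qed
      have "0 = (\<Sum>j\<in>J. (l r * a r j + (\<Sum>i\<in>S. l i * a i j)) * x j)"
        using l2 by simp
      also have "\<dots> = l r * (\<Sum>j\<in>J. a r j * x j) + (\<Sum>i\<in>S. l i * (\<Sum>j\<in>J. a i j * x j))"
        by (simp add: distrib_right sum.distrib sum_distrib_left sum_distrib_right
            sum.swap[of _ S J] mult.assoc)
      also have "(\<Sum>i\<in>S. l i * (\<Sum>j\<in>J. a i j * x j)) = 0" using hx by simp
      finally show ?thesis using \<open>l r \<noteq> 0\<close> by simp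
    qed
  qed
qed

lemma CARDBOUND:
  fixes a :: "'r \<Rightarrow> 'c \<Rightarrow> 'f::field"
  assumes "finite J" "finite S" "indep a J S" "j0 \<in> J" "w j0 \<noteq> 0"
    "\<forall>i\<in>S. (\<Sum>j\<in>J. a i j * w j) = 0"
  shows "card S < card J"
proof (rule ccontr)
  assume "\<not> card S < card J"
  then have "card (J - {j0}) < card S" using assms(1,4) card_Diff_singleton
    by (metis card_Diff1_less not_less order.strict_trans2)
  then obtain l where l: "\<exists>i\<in>S. l i \<noteq> 0" "\<forall>j\<in>J-{j0}. (\<Sum>i\<in>S. a i j * l i) = 0"
    using UD[of "J - {j0}" S "\<lambda>j i. a i j"] assms by auto
  have all: "\<forall>j\<in>J. (\<Sum>i\<in>S. l i * a i j) = 0"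
  proof
    fix j assume j: "j \<in> J"
    show "(\<Sum>i\<in>S. l i * a i j) = 0"
    proof (cases "j = j0")
      case False then show ?thesis using l(2) j by (simp add: mult.commute)
    next
      case True
      have row: "a i j0 * w j0 = - (\<Sum>j\<in>J-{j0}. a i j * w j)" if "i \<in> S" for i
      proof -
        have "(\<Sum>j\<in>J. a i j * w j) = a i j0 * w j0 + (\<Sum>j\<in>J-{j0}. a i j * w j)"
          using assms(1,4) by (simp add: sum.remove)
        then show ?thesis using assms(6) that by (simp add: eq_neg_iff_add_eq_0)
      qed
      have "(\<Sum>i\<in>S. l i * a i j0) * w j0 = (\<Sum>i\<in>S. l i * (a i j0 * w j0))"
        by (simp add: sum_distrib_right mult.assoc)
      also have "\<dots> = (\<Sum>i\<in>S. - (l i * (\<Sum>j\<in>J-{j0}. a i j * w j)))"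
        by (rule sum.cong) (simp_all add: row)
      also have "\<dots> = - (\<Sum>j\<in>J-{j0}. (\<Sum>i\<in>S. a i j * l i) * w j)"
        by (simp add: sum_negf sum_distrib_left sum_distrib_right sum.swap[of _ S] algebra_simps)
      also have "\<dots> = 0" using l(2) by simp
      finally show ?thesis using True assms(5) by simp
    qed
  qed
  then have "\<forall>i\<in>S. l i = 0" using assms(3) unfolding indep_def by blast
  then show False using l(1) by auto
qed



lemma coeff_mult_trunc:
  fixes a v :: "'a::comm_ring_1 poly"
  assumes "degree v \<le> D"
  shows "coeff (a * v) t = (\<Sum>e\<le>D. (if e \<le> t then coeff a (t - e) else 0) * coeff v e)"
proof -
  have "coeff (a * v) t = coeff (v * a) t" by (simp add: mult.commute)
  also have "\<dots> = (\<Sum>e\<le>t. coeff v e * coeff a (t - e))" by (simp add: coeff_mult)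
  also have "\<dots> = (\<Sum>e\<le>max t D. (if e \<le> t then coeff a (t - e) else 0) * coeff v e)"
    by (rule sum.mono_neutral_cong_left) auto
  also have "\<dots> = (\<Sum>e\<le>D. (if e \<le> t then coeff a (t - e) else 0) * coeff v e)"
    by (rule sum.mono_neutral_cong_right) (use assms in \<open>auto simp: coeff_eq_0\<close>)
  finally show ?thesis .
qed

lemma count_ineq:
  fixes s N d :: nat
  assumes "s < N"
  shows "s * (d * (N - 1) + d + 1) < N * (d * (N - 1) + 1)"
proof -
  obtain M where N: "N = Suc M" using assms by (cases N) auto
  have "s * (d * M + d + 1) \<le> M * (d * M + d + 1)"
    using assms N by (intro mult_le_mono1) simp
  also have "\<dots> < Suc M * (d * M + 1)" by (simp add: algebra_simps)
  finally show ?thesis using N by simp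
qed

lemma SIEGEL:
  fixes a :: "'r \<Rightarrow> 'c \<Rightarrow> 'a::field poly"
  assumes fS: "finite S" and fJ: "finite J" and cS: "card S < card J"
    and deg: "\<forall>i\<in>S. \<forall>j\<in>J. degree (a i j) \<le> d"
  shows "\<exists>v. (\<exists>j\<in>J. v j \<noteq> 0) \<and> (\<forall>j. degree (v j) \<le> d * (card J - 1)) \<and>
             (\<forall>i\<in>S. (\<Sum>j\<in>J. a i j * v j) = 0)"
proof -
  define D where "D = d * (card J - 1)"
  define c where "c = (\<lambda>(i, t) (j, e). if e \<le> t then coeff (a i j) (t - e) else 0)"
  have "card (S \<times> {..D + d}) < card (J \<times> {..D})"
    using count_ineq[OF cS, of d] by (simp add: card_cartesian_product D_def)
  then obtain y where y: "\<exists>je\<in>J \<times> {..D}. y je \<noteq> 0"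
      "\<forall>it\<in>S \<times> {..D + d}. (\<Sum>je\<in>J \<times> {..D}. c it je * y je) = 0"
    using UD[of "S \<times> {..D + d}" "J \<times> {..D}" c] fS fJ by auto
  define v where "v = (\<lambda>j. \<Sum>e\<le>D. monom (y (j, e)) e)"
  have cv: "coeff (v j) e = (if e \<le> D then y (j, e) else 0)" for j e
    unfolding v_def coeff_sum by (simp add: coeff_monom)
  have dv: "degree (v j) \<le> D" for j
    by (rule degree_le) (simp add: cv)
  show ?thesis
  proof (intro exI[of _ v] conjI allI ballI)
    show "\<exists>j\<in>J. v j \<noteq> 0"
    proof -
      obtain j e where je: "j \<in> J" "e \<le> D" "y (j, e) \<noteq> 0" using y(1) by auto
      then have "coeff (v j) e \<noteq> 0" by (simp add: cv)
      then have "v j \<noteq> 0" by auto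
      then show ?thesis using je by blast
    qed
    show "degree (v j) \<le> d * (card J - 1)" for j using dv by (simp add: D_def)
    fix i assume i: "i \<in> S"
    show "(\<Sum>j\<in>J. a i j * v j) = 0"
    proof (rule poly_eqI)
      fix t
      show "coeff (\<Sum>j\<in>J. a i j * v j) t = coeff 0 t"
      proof (cases "t \<le> D + d")
        case True
        have "coeff (\<Sum>j\<in>J. a i j * v j) t = (\<Sum>j\<in>J. \<Sum>e\<le>D. c (i, t) (j, e) * y (j, e))"
          unfolding coeff_sum
          by (rule sum.cong[OF refl], subst coeff_mult_trunc[OF dv], rule sum.cong)
             (simp_all add: c_def cv)
        also have "\<dots> = (\<Sum>je\<in>J \<times> {..D}. c (i, t) je * y je)"
          by (simp add: sum.cartesian_product)
        also have "\<dots> = 0" using y(2) i True by auto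
        finally show ?thesis by simp
      next
        case False
        have "coeff (a i j * v j) t = 0" if "j \<in> J" for j
        proof (rule coeff_eq_0)
          have "degree (a i j * v j) \<le> degree (a i j) + degree (v j)" by (rule degree_mult_le)
          also have "\<dots> \<le> d + D" using deg i that dv[of j] by (meson add_le_mono)
          finally show "degree (a i j * v j) < t" using False by simp
        qed
        then show ?thesis by (simp add: coeff_sum)
      qed
    qed
  qed
qed

lemma MAIN_LA:
  fixes a :: "'r \<Rightarrow> 'c \<Rightarrow> 'a::field poly" and w :: "'c \<Rightarrow> 'a poly fract"
  assumes fR: "finite R" and fJ: "finite J" and j0: "j0 \<in> J" "w j0 \<noteq> 0"
    and wsol: "\<forall>i\<in>R. (\<Sum>j\<in>J. Fract (a i j) 1 * w j) = 0"
    and deg: "\<forall>i\<in>R. \<forall>j\<in>J. degree (a i j) \<le> d"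
  shows "\<exists>v. (\<exists>j\<in>J. v j \<noteq> 0) \<and> (\<forall>j. degree (v j) \<le> d * (card J - 1)) \<and>
             (\<forall>i\<in>R. (\<Sum>j\<in>J. a i j * v j) = 0)"
proof -
  define af where "af = (\<lambda>i j. Fract (a i j) (1::'a poly))"
  obtain S where S: "S \<subseteq> R" "indep af J S"
    "\<forall>r\<in>R. \<forall>x. (\<forall>i\<in>S. (\<Sum>j\<in>J. af i j * x j) = 0) \<longrightarrow> (\<Sum>j\<in>J. af r j * x j) = 0"
    using MAXIND[OF fR fJ, of af] by blast
  have fS: "finite S" using S(1) fR finite_subset by blast
  have "card S < card J"
    by (rule CARDBOUND[where w=w, OF fJ fS S(2) j0]) (use S(1) wsol in \<open>auto simp: af_def\<close>)
  then obtain v where v: "\<exists>j\<in>J. v j \<noteq> 0" "\<forall>j. degree (v j) \<le> d * (card J - 1)"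
      "\<forall>i\<in>S. (\<Sum>j\<in>J. a i j * v j) = 0"
    using SIEGEL[OF fS fJ, of a d] deg S(1) by blast
  have emb: "(\<Sum>j\<in>J. af i j * Fract (v j) 1) = Fract (\<Sum>j\<in>J. a i j * v j) 1" for i
    by (simp add: af_def fract1_sum)
  show ?thesis
  proof (intro exI[of _ v] conjI v(1,2) ballI)
    fix r assume r: "r \<in> R"
    have h: "\<And>i. i \<in> S \<Longrightarrow> (\<Sum>j\<in>J. af i j * Fract (v j) 1) = 0" using v(3) by (simp add: emb)
    have "(\<Sum>j\<in>J. af r j * Fract (v j) 1) = 0"
      using S(3)[rule_format, OF r h] .
    then show "(\<Sum>j\<in>J. a r j * v j) = 0" by (simp add: emb)
  qed
qed



definition Pm :: "'a::field poly poly list \<Rightarrow> nat \<Rightarrow> nat \<Rightarrow> 'a poly poly" where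
  "Pm Ls i e = (dleft pderiv ^^ e) (Ls ! i)"

definition Jset :: "'a::field poly poly list \<Rightarrow> nat \<Rightarrow> (nat \<times> nat) set" where
  "Jset Ls M = (SIGMA i:{..<length Ls}. {..M - degree (Ls ! i)})"

definition Rset :: "'a::field poly poly list \<Rightarrow> nat \<Rightarrow> (nat \<times> nat) set" where
  "Rset Ls M = {1..<length Ls} \<times> {..M}"

definition Amat :: "'a::field poly poly list \<Rightarrow> nat \<times> nat \<Rightarrow> nat \<times> nat \<Rightarrow> 'a poly" where
  "Amat Ls row col = (case row of (i, n) \<Rightarrow> case col of (i', e) \<Rightarrow>
     (if i' = 0 then coeff (Pm Ls 0 e) n else 0) - (if i' = i then coeff (Pm Ls i e) n else 0))"

definition Qb :: "'a::field poly poly list \<Rightarrow> nat \<Rightarrow> (nat \<times> nat \<Rightarrow> 'a poly) \<Rightarrow> nat \<Rightarrow> 'a poly poly" where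
  "Qb Ls M v i = (\<Sum>e\<le>M - degree (Ls ! i). monom (v (i, e)) e)"

lemma finite_Jset [simp]: "finite (Jset Ls M)"
  unfolding Jset_def by auto

lemma finite_Rset [simp]: "finite (Rset Ls M)"
  unfolding Rset_def by auto

lemma rowsum:
  fixes \<psi> :: "'a::field poly \<Rightarrow> 'b::comm_ring_1"
  assumes psi: "\<And>a b. \<psi> (a - b) = \<psi> a - \<psi> b" "\<psi> 0 = 0" and i: "0 < i" "i < length Ls"
  shows "(\<Sum>col\<in>Jset Ls M. \<psi> (Amat Ls (i, n) col) * z col)
    = (\<Sum>e\<le>M - degree (Ls ! 0). \<psi> (coeff (Pm Ls 0 e) n) * z (0, e))
    - (\<Sum>e\<le>M - degree (Ls ! i). \<psi> (coeff (Pm Ls i e) n) * z (i, e))"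
proof -
  define X where "X = (\<lambda>i'. \<Sum>e\<le>M - degree (Ls ! i'). \<psi> (coeff (Pm Ls i' e) n) * z (i', e))"
  have ent: "\<psi> (Amat Ls (i, n) (i', e)) =
      (if i' = 0 then \<psi> (coeff (Pm Ls 0 e) n) else 0) - (if i' = i then \<psi> (coeff (Pm Ls i e) n) else 0)"
    for i' e
    unfolding Amat_def by (simp add: psi)
  have "(\<Sum>col\<in>Jset Ls M. \<psi> (Amat Ls (i, n) col) * z col)
      = (\<Sum>i'<length Ls. \<Sum>e\<le>M - degree (Ls ! i'). \<psi> (Amat Ls (i, n) (i', e)) * z (i', e))"
    unfolding Jset_def by (subst sum.Sigma) auto
  also have "\<dots> = (\<Sum>i'<length Ls. (if i' = 0 then X 0 else 0) - (if i' = i then X i else 0))"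
    unfolding ent X_def
    by (rule sum.cong[OF refl]) (auto simp: left_diff_distrib sum_subtractf)
  also have "\<dots> = X 0 - X i"
  proof -
    have "0 < length Ls" using i(1,2) by linarith
    then show ?thesis unfolding sum_subtractf using i by simp
  qed
  finally show ?thesis unfolding X_def .
qed

lemma rowsum_id:
  assumes "0 < i" "i < length Ls"
  shows "(\<Sum>col\<in>Jset Ls M. Amat Ls (i, n) col * z col)
    = (\<Sum>e\<le>M - degree (Ls ! 0). coeff (Pm Ls 0 e) n * z (0, e))
    - (\<Sum>e\<le>M - degree (Ls ! i). coeff (Pm Ls i e) n * z (i, e))"
  using rowsum[where \<psi>="\<lambda>x. x", OF _ _ assms] by simp

lemma rowsum_fract:
  assumes "0 < i" "i < length Ls"
  shows "(\<Sum>col\<in>Jset Ls M. Fract (Amat Ls (i, n) col) 1 * z col)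
    = (\<Sum>e\<le>M - degree (Ls ! 0). Fract (coeff (Pm Ls 0 e) n) 1 * z (0, e))
    - (\<Sum>e\<le>M - degree (Ls ! i). Fract (coeff (Pm Ls i e) n) 1 * z (i, e))"
  using rowsum[where \<psi>="\<lambda>x. Fract x 1", OF _ _ assms] by simp

lemma coeff_Qb: "coeff (Qb Ls M v i) e = (if e \<le> M - degree (Ls ! i) then v (i, e) else 0)"
  unfolding Qb_def coeff_sum by (simp add: coeff_monom)

lemma degree_Qb: "degree (Qb Ls M v i) \<le> M - degree (Ls ! i)"
  by (rule degree_le) (simp add: coeff_Qb)

lemma coeff_omult_Qb:
  "coeff (omult pderiv (Qb Ls M v i) (Ls ! i)) n
     = (\<Sum>e\<le>M - degree (Ls ! i). coeff (Pm Ls i e) n * v (i, e))"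
  unfolding coeff_omult[OF degree_Qb] Pm_def
  by (rule sum.cong) (simp_all add: coeff_Qb mult.commute)

lemma degree_omult_Qb:
  assumes "degree (Ls ! i) \<le> M"
  shows "degree (omult pderiv (Qb Ls M v i) (Ls ! i)) \<le> M"
  using degree_omult_le[of pderiv "Qb Ls M v i" "Ls ! i"] degree_Qb[of Ls M v i] assms
  by linarith

lemma BUILD:
  fixes Ls :: "'a::field poly poly list"
  assumes nz: "\<forall>L\<in>set Ls. L \<noteq> 0" and k: "Ls \<noteq> []"
    and Ms: "\<forall>i<length Ls. degree (Ls ! i) \<le> M"
    and vnz: "\<exists>c\<in>Jset Ls M. v c \<noteq> 0"
    and vsol: "\<forall>row\<in>Rset Ls M. (\<Sum>col\<in>Jset Ls M. Amat Ls row col * v col) = 0"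
  defines "Mb \<equiv> omult pderiv (Qb Ls M v 0) (Ls ! 0)"
  shows "Mb \<noteq> 0" "degree Mb \<le> M"
    "\<forall>i<length Ls. Mb = omult pderiv (Qb Ls M v i) (Ls ! i)"
    "\<And>n. coeff Mb n = (\<Sum>e\<le>M - degree (Ls ! 0). coeff (Pm Ls 0 e) n * v (0, e))"
proof -
  have k0: "0 < length Ls" using k by simp
  show cf: "\<And>n. coeff Mb n = (\<Sum>e\<le>M - degree (Ls ! 0). coeff (Pm Ls 0 e) n * v (0, e))"
    unfolding Mb_def by (rule coeff_omult_Qb)
  show dM: "degree Mb \<le> M" unfolding Mb_def using Ms k0 by (intro degree_omult_Qb) simp
  show eq: "\<forall>i<length Ls. Mb = omult pderiv (Qb Ls M v i) (Ls ! i)"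
  proof (intro allI impI)
    fix i assume i: "i < length Ls"
    show "Mb = omult pderiv (Qb Ls M v i) (Ls ! i)"
    proof (cases "i = 0")
      case True then show ?thesis by (simp add: Mb_def)
    next
      case False
      show ?thesis
      proof (rule poly_eqI)
        fix n
        show "coeff Mb n = coeff (omult pderiv (Qb Ls M v i) (Ls ! i)) n"
        proof (cases "n \<le> M")
          case True
          have "(i, n) \<in> Rset Ls M" using True False i by (simp add: Rset_def)
          then have "(\<Sum>col\<in>Jset Ls M. Amat Ls (i, n) col * v col) = 0" using vsol by blast
          then have "(\<Sum>e\<le>M - degree (Ls ! 0). coeff (Pm Ls 0 e) n * v (0, e))
            - (\<Sum>e\<le>M - degree (Ls ! i). coeff (Pm Ls i e) n * v (i, e)) = 0"
            using rowsum_id[where i=i and Ls=Ls and M=M and n=n and z=v] False i by simp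
          then show ?thesis
            unfolding cf coeff_omult_Qb by simp
        next
          case False
          have "degree (omult pderiv (Qb Ls M v i) (Ls ! i)) \<le> M"
            using Ms i by (intro degree_omult_Qb) simp
          then show ?thesis using dM False by (simp add: coeff_eq_0)
        qed
      qed
    qed
  qed
  show "Mb \<noteq> 0"
  proof -
    obtain i e where ie: "(i, e) \<in> Jset Ls M" "v (i, e) \<noteq> 0" using vnz by auto
    then have i: "i < length Ls" and e: "e \<le> M - degree (Ls ! i)" by (auto simp: Jset_def)
    have "coeff (Qb Ls M v i) e \<noteq> 0" using ie e by (simp add: coeff_Qb)
    then have "Qb Ls M v i \<noteq> 0" by auto
    moreover have "Ls ! i \<noteq> 0" using nz i by simp
    ultimately have "omult pderiv (Qb Ls M v i) (Ls ! i) \<noteq> 0"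
      by (intro omult_nonzero) simp_all
    then show ?thesis using eq i by simp
  qed
qed

lemma EXTRACT:
  fixes Ls :: "'a::field poly poly list" and Q :: "nat \<Rightarrow> 'a poly fract poly"
  assumes k: "Ls \<noteq> []"
    and QE: "\<forall>i<length Ls. E = omult fderiv (Q i) (embed_op (Ls ! i))"
    and dQ: "\<forall>i<length Ls. degree (Q i) \<le> M - degree (Ls ! i)"
  shows "\<forall>row\<in>Rset Ls M. (\<Sum>col\<in>Jset Ls M. Fract (Amat Ls row col) 1 * (\<lambda>(i, e). coeff (Q i) e) col) = 0"
proof
  fix row assume "row \<in> Rset Ls M"
  then obtain i n where row: "row = (i, n)" "0 < i" "i < length Ls" by (auto simp: Rset_def)
  have G: "coeff E n = (\<Sum>e\<le>M - degree (Ls ! i'). Fract (coeff (Pm Ls i' e) n) 1 * coeff (Q i') e)"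
    if "i' < length Ls" for i'
  proof -
    have "coeff E n = coeff (omult fderiv (Q i') (embed_op (Ls ! i'))) n" using QE that by simp
    also have "\<dots> = (\<Sum>e\<le>M - degree (Ls ! i'). coeff (Q i') e * coeff ((dleft fderiv ^^ e) (embed_op (Ls ! i'))) n)"
      using dQ that by (intro coeff_omult) simp
    also have "\<dots> = (\<Sum>e\<le>M - degree (Ls ! i'). Fract (coeff (Pm Ls i' e) n) 1 * coeff (Q i') e)"
      by (simp add: dleft_pow_embed Pm_def mult.commute)
    finally show ?thesis .
  qed
  have k0: "0 < length Ls" using k by simp
  show "(\<Sum>col\<in>Jset Ls M. Fract (Amat Ls row col) 1 * (\<lambda>(i, e). coeff (Q i) e) col) = 0"
    unfolding row(1) rowsum_fract[OF row(2,3)]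
    using G[OF k0] G[OF row(3)] by simp
qed



lemma CONTENT:
  fixes L Mb :: "'a::field poly poly" and a b :: "'a poly"
  assumes prim: "\<forall>g. (\<forall>c\<in>set (coeffs L). g dvd c) \<longrightarrow> is_unit g"
    and b: "b \<noteq> 0" and Mb: "Mb \<noteq> 0" and eq: "\<And>n. coeff L n * b = a * coeff Mb n"
  shows "degree (coeff L n) \<le> degree (coeff Mb n)"
proof -
  obtain n1 where n1: "coeff Mb n1 \<noteq> 0" using Mb by (meson leading_coeff_0_iff)
  have cross: "coeff L n * coeff Mb m = coeff L m * coeff Mb n" for n m
  proof -
    have "(coeff L n * coeff Mb m) * b = (coeff L m * coeff Mb n) * b"
    proof -
      have "(coeff L n * coeff Mb m) * b = (coeff L n * b) * coeff Mb m" by (simp add: ac_simps)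
      also have "\<dots> = a * coeff Mb n * coeff Mb m" using eq[of n] by simp
      also have "\<dots> = (coeff L m * b) * coeff Mb n" using eq[of m] by (simp add: ac_simps)
      finally show ?thesis by (simp add: ac_simps)
    qed
    then show ?thesis using b by simp
  qed
  define I where "I = {t. \<exists>s. \<forall>n. coeff L n * t = s * coeff Mb n}"
  have uniq: "s1 = s2" if "\<forall>n. coeff L n * t = s1 * coeff Mb n" "\<forall>n. coeff L n * t = s2 * coeff Mb n" for t s1 s2
    using that(1)[rule_format, of n1] that(2)[rule_format, of n1] n1 by simp
  have "b \<in> I" unfolding I_def using eq by blast
  then obtain b0 where b0: "b0 \<in> I \<and> b0 \<noteq> 0" "\<forall>y. y \<in> I \<and> y \<noteq> 0 \<longrightarrow> degree b0 \<le> degree y"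
    using ex_has_least_nat[of "\<lambda>t. t \<in> I \<and> t \<noteq> 0" b degree] b by blast
  then obtain s0 where s0: "\<forall>n. coeff L n * b0 = s0 * coeff Mb n" unfolding I_def by blast
  have dvd: "s0 dvd coeff L m" for m
  proof -
    define q where "q = coeff Mb m div b0"
    define rr where "rr = coeff Mb m mod b0"
    have dm: "coeff Mb m = q * b0 + rr" unfolding q_def rr_def by simp
    have rrI: "\<forall>n. coeff L n * rr = (coeff L m - q * s0) * coeff Mb n"
    proof
      fix n
      have "coeff L n * rr = coeff L n * coeff Mb m - q * (coeff L n * b0)"
        using dm by (simp add: algebra_simps)
      also have "\<dots> = (coeff L m - q * s0) * coeff Mb n"
        using cross[of n m] s0 by (simp add: algebra_simps)
      finally show "coeff L n * rr = (coeff L m - q * s0) * coeff Mb n" .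
    qed
    have "rr = 0"
    proof (rule ccontr)
      assume "rr \<noteq> 0"
      then have "degree rr < degree b0" using b0(1) degree_mod_less'[of b0 "coeff Mb m"]
        unfolding rr_def by blast
      moreover have "rr \<in> I" unfolding I_def using rrI by blast
      ultimately show False using b0(2) \<open>rr \<noteq> 0\<close> by fastforce
    qed
    then have "\<forall>n. coeff L n * 0 = (coeff L m - q * s0) * coeff Mb n" using rrI by simp
    moreover have "\<forall>n. coeff L n * 0 = 0 * coeff Mb n" by simp
    ultimately have "coeff L m - q * s0 = 0" using uniq by blast
    then have "coeff L m = q * s0" by simp
    then show ?thesis by simp
  qed
  have "\<forall>c\<in>set (coeffs L). s0 dvd c"
  proof
    fix c assume "c \<in> set (coeffs L)"
    then have "c \<in> range (coeff L)" by (simp add: range_coeff)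
    then show "s0 dvd c" using dvd by auto
  qed
  then have u: "is_unit s0" using prim by blast
  then have s00: "s0 \<noteq> 0" by auto
  have ds0: "degree s0 = 0" using u s00 is_unit_iff_degree by blast
  show ?thesis
  proof (cases "coeff L n = 0")
    case True then show ?thesis by simp
  next
    case False
    have "coeff L n * b0 \<noteq> 0" using False b0(1) by simp
    then have Mn: "coeff Mb n \<noteq> 0" using s0 by (metis mult_zero_right)
    have "degree (coeff L n) + degree b0 = degree (s0 * coeff Mb n)"
      using s0 False b0(1) degree_mult_eq[of "coeff L n" b0] by simp
    also have "\<dots> = degree (coeff Mb n)" using s00 Mn ds0 by (simp add: degree_mult_eq)
    finally show ?thesis by simp
  qed
qed

lemma card_Jset: "card (Jset Ls M) = (\<Sum>i<length Ls. M - degree (Ls ! i) + 1)"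
  unfolding Jset_def by simp

lemma card_Jset_sum:
  assumes "\<forall>i<length Ls. degree (Ls ! i) \<le> M"
  shows "card (Jset Ls M) + (\<Sum>i<length Ls. degree (Ls ! i)) = length Ls * (M + 1)"
proof -
  have "card (Jset Ls M) + (\<Sum>i<length Ls. degree (Ls ! i))
      = (\<Sum>i<length Ls. M - degree (Ls ! i) + 1 + degree (Ls ! i))"
    unfolding card_Jset sum.distrib[symmetric] by simp
  also have "\<dots> = (\<Sum>i<length Ls. M + 1)"
    by (rule sum.cong) (use assms in auto)
  finally show ?thesis by simp
qed

lemma card_Rset: "Ls \<noteq> [] \<Longrightarrow> card (Rset Ls M) + (M + 1) = length Ls * (M + 1)"
  unfolding Rset_def by (cases "length Ls") (simp_all add: card_cartesian_product)

lemma degree_Amat: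
  assumes "\<forall>L\<in>set Ls. degx L \<le> d" "fst row < length Ls" "fst col < length Ls"
  shows "degree (Amat Ls row col) \<le> d"
proof -
  obtain i n i' e where rc: "row = (i, n)" "col = (i', e)" by (cases row, cases col) auto
  have P: "degree (coeff (Pm Ls j e') m) \<le> d" if "j < length Ls" for j e' m
  proof -
    have "degree (coeff (Pm Ls j e') m) \<le> degx (Ls ! j)"
      unfolding Pm_def by (rule degree_coeff_dleft_pow) (rule degree_coeff_le_degx)
    also have "\<dots> \<le> d" using assms(1) that by simp
    finally show ?thesis .
  qed
  show ?thesis
    unfolding rc Amat_def using assms(2,3) rc P
    by (auto intro!: order.trans[OF degree_diff_le_max] simp: P)
qed



lemma BUILD_CLM:
  fixes Ls :: "'a::field poly poly list"
  assumes "\<forall>i<length Ls. Mb = omult pderiv (Qb Ls M v i) (Ls ! i)"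
  shows "common_left_multiple Ls (embed_op Mb)"
  unfolding common_left_multiple_def
proof
  fix Li assume "Li \<in> set Ls"
  then obtain i where i: "i < length Ls" "Li = Ls ! i" by (auto simp: in_set_conv_nth)
  have "embed_op Mb = omult fderiv (embed_op (Qb Ls M v i)) (embed_op Li)"
    using assms i by (simp add: embed_omult)
  then show "\<exists>Q. embed_op Mb = omult fderiv Q (embed_op Li)" by blast
qed

lemma degA:
  assumes "\<forall>L\<in>set Ls. degx L \<le> d"
  shows "\<forall>i\<in>Rset Ls M. \<forall>j\<in>Jset Ls M. degree (Amat Ls i j) \<le> d"
proof (intro ballI)
  fix i j assume "i \<in> Rset Ls M" "j \<in> Jset Ls M"
  then have "fst i < length Ls" "fst j < length Ls" by (auto simp: Rset_def Jset_def)
  then show "degree (Amat Ls i j) \<le> d" using degree_Amat[OF assms] by blast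
qed

theorem theorem4:
  fixes Ls :: "'a::field poly poly list" and L :: "'a poly poly"
  assumes "Ls \<noteq> []"
    and "\<forall>Li\<in>set Ls. Li \<noteq> 0"
    and "is_lclm Ls L"
  shows "degx L \<le> Max (degx ` set Ls) *
           (length Ls * ((\<Sum>Li\<leftarrow>Ls. degree Li) + 1) - (\<Sum>Li\<leftarrow>Ls. degree Li))"
proof -
  note ne = assms(1) and nz = assms(2)
  define k where "k = length Ls"
  define d where "d = Max (degx ` set Ls)"
  define s where "s = (\<Sum>Li\<leftarrow>Ls. degree Li)"
  have k0: "0 < k" using ne by (simp add: k_def)
  have s_eq: "s = (\<Sum>i<k. degree (Ls ! i))"
    unfolding s_def k_def sum_list_sum_nth atLeast0LessThan by simp
  have dL: "\<forall>Li\<in>set Ls. degx Li \<le> d" unfolding d_def by simp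
  from assms(3) have L0: "L \<noteq> 0" and clm: "common_left_multiple Ls (embed_op L)"
    and minl: "\<And>M. M \<noteq> 0 \<Longrightarrow> common_left_multiple Ls M \<Longrightarrow> degree L \<le> degree M"
    and prim: "\<forall>g. (\<forall>c\<in>set (coeffs L). g dvd c) \<longrightarrow> is_unit g"
    unfolding is_lclm_def by blast+
  have ex: "\<forall>i\<in>{..<k}. \<exists>Q. embed_op L = omult fderiv Q (embed_op (Ls ! i))"
    using clm unfolding common_left_multiple_def k_def by auto
  from bchoice[OF ex] obtain Q where Q: "\<forall>i\<in>{..<k}. embed_op L = omult fderiv (Q i) (embed_op (Ls ! i))"
    by (elim exE) (rule that)
  define m where "m = degree L"
  have Qi: "Q i \<noteq> 0 \<and> degree (Q i) + degree (Ls ! i) = m" if i: "i < k" for i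
  proof
    have E: "embed_op L = omult fderiv (Q i) (embed_op (Ls ! i))" using Q i by blast
    show Qn: "Q i \<noteq> 0"
    proof
      assume "Q i = 0"
      then have "embed_op L = 0" using E by simp
      then show False using L0 by simp
    qed
    have "Ls ! i \<noteq> 0" using nz i by (simp add: k_def)
    then have "degree (omult fderiv (Q i) (embed_op (Ls ! i))) = degree (Q i) + degree (Ls ! i)"
      using omult_nonzero(2)[of fderiv "Q i" "embed_op (Ls ! i)"] Qn by simp
    then have "degree (embed_op L) = degree (Q i) + degree (Ls ! i)" by (simp only: E)
    then show "degree (Q i) + degree (Ls ! i) = m" by (simp add: m_def)
  qed
  have rm: "\<forall>i<k. degree (Ls ! i) \<le> m" using Qi by fastforce
  have rs: "\<forall>i<k. degree (Ls ! i) \<le> s"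
  proof (intro allI impI)
    fix i assume "i < k"
    then show "degree (Ls ! i) \<le> s" unfolding s_eq by (intro member_le_sum) auto
  qed
  have sJ: "card (Jset Ls s) + s = k * (s + 1)"
    using card_Jset_sum[of Ls s] rs unfolding s_eq k_def by simp
  have "m \<le> s"
  proof -
    have cardA: "card (Rset Ls s) < card (Jset Ls s)"
      using card_Rset[OF ne, of s] sJ unfolding k_def by simp
    obtain w where w: "\<exists>j\<in>Jset Ls s. w j \<noteq> 0"
        "\<forall>i\<in>Rset Ls s. (\<Sum>j\<in>Jset Ls s. Fract (Amat Ls i j) 1 * w j) = 0"
      using UD[of "Rset Ls s" "Jset Ls s" "\<lambda>i j. Fract (Amat Ls i j) 1"] cardA by auto
    then obtain j0 where j0: "j0 \<in> Jset Ls s" "w j0 \<noteq> 0" by blast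
    obtain v where v: "\<exists>j\<in>Jset Ls s. v j \<noteq> 0"
        "\<forall>i\<in>Rset Ls s. (\<Sum>j\<in>Jset Ls s. Amat Ls i j * v j) = 0"
      using MAIN_LA[OF finite_Rset finite_Jset j0 w(2) degA[OF dL]] by blast
    have rs': "\<forall>i<length Ls. degree (Ls ! i) \<le> s" using rs k_def by simp
    note B = BUILD[OF nz ne rs' v(1) v(2)]
    have "degree L \<le> degree (embed_op (omult pderiv (Qb Ls s v 0) (Ls ! 0)))"
      using B(1) BUILD_CLM[OF B(3)] by (intro minl) simp_all
    then show ?thesis using B(2) by (simp add: m_def)
  qed
  have dQ: "\<forall>i<length Ls. degree (Q i) \<le> m - degree (Ls ! i)" using Qi k_def by fastforce
  have QE: "\<forall>i<length Ls. embed_op L = omult fderiv (Q i) (embed_op (Ls ! i))" using Q k_def by simp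
  define w2 where "w2 = (\<lambda>(i, e). coeff (Q i) e)"
  have w2sol: "\<forall>i\<in>Rset Ls m. (\<Sum>j\<in>Jset Ls m. Fract (Amat Ls i j) 1 * w2 j) = 0"
    unfolding w2_def using EXTRACT[OF ne QE dQ] .
  define j0 where "j0 = (0::nat, m - degree (Ls ! 0))"
  have j0J: "j0 \<in> Jset Ls m" using k0 unfolding j0_def Jset_def k_def by simp
  have "degree (Q 0) = m - degree (Ls ! 0)" using conjunct2[OF Qi[OF k0]] by linarith
  then have w2j0: "w2 j0 \<noteq> 0" using conjunct1[OF Qi[OF k0]] unfolding w2_def j0_def
    by (metis leading_coeff_0_iff case_prod_conv)
  obtain v where v: "\<exists>j\<in>Jset Ls m. v j \<noteq> 0"
      "\<forall>j. degree (v j) \<le> d * (card (Jset Ls m) - 1)"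
      "\<forall>i\<in>Rset Ls m. (\<Sum>j\<in>Jset Ls m. Amat Ls i j * v j) = 0"
    using MAIN_LA[OF finite_Rset finite_Jset j0J w2j0 w2sol degA[OF dL]] by blast
  have rm': "\<forall>i<length Ls. degree (Ls ! i) \<le> m" using rm k_def by simp
  define Mb where "Mb = omult pderiv (Qb Ls m v 0) (Ls ! 0)"
  note B = BUILD[OF nz ne rm' v(1) v(3), folded Mb_def]
  have cMb: "common_left_multiple Ls (embed_op Mb)" using BUILD_CLM[OF B(3)] .
  have "m \<le> degree Mb" using minl[OF _ cMb] B(1) by (simp add: m_def)
  then have dMb: "degree Mb = m" using B(2) by simp
  define N where "N = card (Jset Ls m)"
  have "Jset Ls m \<noteq> {}" using j0J by blast
  then have N1: "1 \<le> N" unfolding N_def using finite_Jset[of Ls m]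
    by (simp add: Suc_le_eq card_gt_0_iff)
  have degxMb: "degx Mb \<le> d * N"
  proof (rule degx_le[OF B(1)])
    fix n
    have "degree (coeff Mb n) \<le> d + d * (N - 1)"
      unfolding B(4)
    proof (rule degree_sum_le)
      fix e
      have "degree (coeff (Pm Ls 0 e) n) \<le> degx (Ls ! 0)"
        unfolding Pm_def by (rule degree_coeff_dleft_pow) (rule degree_coeff_le_degx)
      also have "\<dots> \<le> d" using dL k0 k_def by simp
      finally have "degree (coeff (Pm Ls 0 e) n) \<le> d" .
      then show "degree (coeff (Pm Ls 0 e) n * v (0, e)) \<le> d + d * (N - 1)"
      proof -
        have "degree (coeff (Pm Ls 0 e) n * v (0, e)) \<le> degree (coeff (Pm Ls 0 e) n) + degree (v (0, e))"
          by (rule degree_mult_le)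
        moreover have "degree (v (0, e)) \<le> d * (N - 1)" using v(2) N_def by simp
        ultimately show ?thesis using \<open>degree (coeff (Pm Ls 0 e) n) \<le> d\<close> by linarith
      qed
    qed simp
    also have "d + d * (N - 1) = d * N" using N1 by (cases N) simp_all
    finally show "degree (coeff Mb n) \<le> d * N" .
  qed
  have lcMb: "lead_coeff Mb \<noteq> 0" using B(1) by simp
  define c where "c = Fract (lead_coeff L) (lead_coeff Mb)"
  have Dd: "embed_op L - smult c (embed_op Mb) = 0"
  proof (rule ccontr)
    define D where "D = embed_op L - smult c (embed_op Mb)"
    assume "embed_op L - smult c (embed_op Mb) \<noteq> 0"
    then have D0: "D \<noteq> 0" by (simp add: D_def)
    have cD: "common_left_multiple Ls D"
      unfolding common_left_multiple_def
    proof
      fix Li assume "Li \<in> set Ls"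
      then obtain i where i: "i < length Ls" "Li = Ls ! i" by (auto simp: in_set_conv_nth)
      have "D = omult fderiv (Q i - smult c (embed_op (Qb Ls m v i))) (embed_op Li)"
        unfolding omult_lin D_def using QE B(3) i by (simp add: embed_omult)
      then show "\<exists>Q. D = omult fderiv Q (embed_op Li)" by blast
    qed
    have dD: "degree D \<le> m"
      unfolding D_def using degree_diff_le_max[of "embed_op L" "smult c (embed_op Mb)"]
        degree_smult_le[of c "embed_op Mb"] dMb by (simp add: m_def)
    have "coeff D m = 0"
    proof -
      have "coeff D m = Fract (lead_coeff L) 1 - c * Fract (lead_coeff Mb) 1"
        unfolding D_def using dMb by (simp add: m_def)
      also have "c * Fract (lead_coeff Mb) 1 = Fract (lead_coeff L) 1"
        unfolding c_def using lcMb by (simp add: eq_fract)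
      finally show ?thesis by simp
    qed
    then have "degree D \<noteq> m" using D0 by auto
    then have "degree D < m" using dD by simp
    moreover have "m \<le> degree D" using minl[OF D0 cD] by (simp add: m_def)
    ultimately show False by simp
  qed
  have rel: "coeff L n * lead_coeff Mb = lead_coeff L * coeff Mb n" for n
  proof -
    have "coeff (embed_op L) n = coeff (smult c (embed_op Mb)) n" using Dd by simp
    then have "Fract (coeff L n) 1 = Fract (lead_coeff L * coeff Mb n) (lead_coeff Mb)"
      by (simp add: c_def)
    then show ?thesis using lcMb by (simp add: eq_fract)
  qed
  have "degx L \<le> degx Mb"
  proof (rule degx_le[OF L0])
    fix n
    have "degree (coeff L n) \<le> degree (coeff Mb n)"
      by (rule CONTENT[OF prim lcMb B(1) rel])
    also have "\<dots> \<le> degx Mb" by (rule degree_coeff_le_degx)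
    finally show "degree (coeff L n) \<le> degx Mb" .
  qed
  also have "\<dots> \<le> d * N" by (rule degxMb)
  also have "\<dots> \<le> d * card (Jset Ls s)"
  proof (rule mult_le_mono2)
    show "N \<le> card (Jset Ls s)"
      unfolding N_def card_Jset using \<open>m \<le> s\<close> by (intro sum_mono) simp
  qed
  also have "card (Jset Ls s) = k * (s + 1) - s" using sJ by simp
  finally show ?thesis unfolding d_def k_def s_def .
qed


end
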